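(* For $\sigma \in \mathfrak{S}_j$ and $\tau \in \mathfrak{S}_k$, let $\sigma^{-1}=\sigma^{-1}_1\cdots \sigma^{-1}_j$ and $\tau^{-1}=\tau^{-1}_1\cdots \tau^{-1}_k$ denote the inverses of $\sigma$ and $\tau$ respectively. Define $\pi=\sigma^{-1}_1\cdots \sigma^{-1}_j$ and $\delta=(j+1)(\tau^{-1}_1+j+1)\cdots (\tau^{-1}_k+j+1)$. Then \begin{align*} \sum_{\mu \in \sigma \lozenge \tau} t^{\mathrm{ides}(\mu)}&=\sum_{\alpha \in \mathrm{Sh}_l(\pi,\delta)} t^{\mathrm{des}(\alpha)},\\ \sum_{\mu \in \sigma \vartriangle \tau} t^{\mathrm{ides}(\mu)}&=\sum_{\alpha \in \mathrm{Sh}_{ls}(\pi,\delta)} t^{\mathrm{des}(\alpha)},\\ \sum_{\mu \in \sigma \triangledown \tau} t^{\mathrm{ides}(\mu)}&=\sum_{\alpha \in \mathrm{Sh}_{ll}(\pi,\delta)} t^{\mathrm{des}(\alpha)}. \end{align*}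
   Context: $\mathfrak{S}_n$ is the set of permutations of $[n]$. For a permutation $\alpha=\alpha_1\cdots\alpha_n$, $\mathrm{des}(\alpha)$ is the number of indices $i$ with $\alpha_i>\alpha_{i+1}$, and $\mathrm{ides}(\alpha)=\mathrm{des}(\alpha^{-1})$. For $\sigma\in\mathfrak{S}_j$, $\tau\in\mathfrak{S}_k$: $\sigma \lozenge\tau =\{ \mu = \sigma'1\tau' \in \mathfrak{S}_{j+k+1} : \sigma' \sim \sigma,\ \tau' \sim \tau \}$; $\sigma \vartriangle \tau =\{ \mu = \sigma'1\tau' \in \mathfrak{S}_{j+k+1} : \sigma' \sim \sigma,\ \tau' \sim \tau,\ j+k+1\in \tau' \}$; $\sigma \triangledown \tau =\{ \mu = \sigma'1\tau' \in \mathfrak{S}_{j+k+1} : \sigma' \sim \sigma,\ \tau' \sim \tau,\ 2\in \tau' \}$, where $\sigma'\sim\sigma$ means that reducing the letters of $\sigma'$ order-preservingly to $\{1,\dots,j\}$ yields $\sigma$. A permutation of length $n$ here means a sequence of $n$ distinct integers. For disjoint permutations $\pi=\pi_1\cdots\pi_m$ and $\delta=\delta_1\cdots\delta_n$ (no common letters), a shuffle of $\pi$ and $\delta$ is a permutation $\alpha=\alpha_1\cdots\alpha_{m+n}$ containing both $\pi$ and $\delta$ as subsequences. $\mathrm{Sh}_l(\pi,\delta)$ is the set of shuffles $\alpha$ of $\pi$ and $\delta$ with $\alpha_1=\delta_1$; $\mathrm{Sh}_{ls}(\pi,\delta)$ is the set of shuffles with $\alpha_1=\delta_1$ and $\alpha_{n+m}=\delta_n$;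 $\mathrm{Sh}_{ll}(\pi,\delta)$ is the set of shuffles with $\alpha_1=\delta_1$ and $\alpha_2=\delta_2$. *)

theory Defs
  imports Main "HOL-Library.Sublist"
begin

definition perms :: "nat \<Rightarrow> nat list set" where
  "perms n = {xs. distinct xs \<and> set xs = {1..n}}"

definition des :: "nat list \<Rightarrow> nat" where
  "des xs = card {i. Suc i < length xs \<and> xs ! i > xs ! Suc i}"

text \<open>Inverse of a permutation of 1..n given in one-line notation.\<close>
definition inv_perm :: "nat list \<Rightarrow> nat list" where
  "inv_perm xs = map (\<lambda>v. Suc (LEAST i. i < length xs \<and> xs ! i = v)) [1..<Suc (length xs)]"

definition ides :: "nat list \<Rightarrow> nat" where
  "ides xs = des (inv_perm xs)"

text \<open>Order-preserving reduction (standardization) of a word of distinct letters to 1..length.\<close>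
definition red :: "nat list \<Rightarrow> nat list" where
  "red xs = map (\<lambda>x. Suc (card {y \<in> set xs. y < x})) xs"

definition diamond :: "nat list \<Rightarrow> nat list \<Rightarrow> nat list set" where
  "diamond \<sigma> \<tau> = {\<mu> \<in> perms (length \<sigma> + length \<tau> + 1).
      \<exists>\<sigma>' \<tau>'. \<mu> = \<sigma>' @ [1] @ \<tau>' \<and> red \<sigma>' = \<sigma> \<and> red \<tau>' = \<tau>}"

definition utri :: "nat list \<Rightarrow> nat list \<Rightarrow> nat list set" where
  "utri \<sigma> \<tau> = {\<mu> \<in> perms (length \<sigma> + length \<tau> + 1).
      \<exists>\<sigma>' \<tau>'. \<mu> = \<sigma>' @ [1] @ \<tau>' \<and> red \<sigma>' = \<sigma> \<and> red \<tau>' = \<tau>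
              \<and> length \<sigma> + length \<tau> + 1 \<in> set \<tau>'}"

definition dtri :: "nat list \<Rightarrow> nat list \<Rightarrow> nat list set" where
  "dtri \<sigma> \<tau> = {\<mu> \<in> perms (length \<sigma> + length \<tau> + 1).
      \<exists>\<sigma>' \<tau>'. \<mu> = \<sigma>' @ [1] @ \<tau>' \<and> red \<sigma>' = \<sigma> \<and> red \<tau>' = \<tau>
              \<and> 2 \<in> set \<tau>'}"

definition is_shuffle :: "nat list \<Rightarrow> nat list \<Rightarrow> nat list \<Rightarrow> bool" where
  "is_shuffle \<pi> \<delta> \<alpha> \<longleftrightarrow> distinct \<alpha> \<and> length \<alpha> = length \<pi> + length \<delta>
      \<and> subseq \<pi> \<alpha> \<and> subseq \<delta> \<alpha>"

definition Sh_l :: "nat list \<Rightarrow> nat list \<Rightarrow> nat list set" where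
  "Sh_l \<pi> \<delta> = {\<alpha>. is_shuffle \<pi> \<delta> \<alpha> \<and> 1 \<le> length \<delta> \<and> \<alpha> ! 0 = \<delta> ! 0}"

definition Sh_ls :: "nat list \<Rightarrow> nat list \<Rightarrow> nat list set" where
  "Sh_ls \<pi> \<delta> = {\<alpha>. is_shuffle \<pi> \<delta> \<alpha> \<and> 1 \<le> length \<delta> \<and> \<alpha> ! 0 = \<delta> ! 0
      \<and> \<alpha> ! (length \<pi> + length \<delta> - 1) = \<delta> ! (length \<delta> - 1)}"

definition Sh_ll :: "nat list \<Rightarrow> nat list \<Rightarrow> nat list set" where
  "Sh_ll \<pi> \<delta> = {\<alpha>. is_shuffle \<pi> \<delta> \<alpha> \<and> 2 \<le> length \<delta> \<and> \<alpha> ! 0 = \<delta> ! 0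
      \<and> \<alpha> ! 1 = \<delta> ! 1}"

end

theory Submission
  imports Defs
begin

definition idx :: "nat list \<Rightarrow> nat \<Rightarrow> nat" where
  "idx xs v = (LEAST i. i < length xs \<and> xs ! i = v)"

definition posl :: "nat list \<Rightarrow> nat list" where
  "posl xs = map (\<lambda>v. Suc (idx xs v)) (sorted_list_of_set (set xs))"

lemma idx_in: "v \<in> set xs \<Longrightarrow> idx xs v < length xs \<and> xs ! idx xs v = v"
proof -
  assume "v \<in> set xs"
  then obtain i where "i < length xs \<and> xs ! i = v" by (auto simp: in_set_conv_nth)
  from LeastI[of "\<lambda>i. i < length xs \<and> xs ! i = v", OF this]
  show ?thesis unfolding idx_def .
qed

lemma idx_nth: "distinct xs \<Longrightarrow> i < length xs \<Longrightarrow> idx xs (xs ! i) = i"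
proof -
  assume a: "distinct xs" "i < length xs"
  then have "idx xs (xs ! i) < length xs \<and> xs ! idx xs (xs ! i) = xs ! i" using idx_in by simp
  then show ?thesis using a nth_eq_iff_index_eq[of xs "idx xs (xs ! i)" i] by blast
qed

lemma ssl: "sorted_wrt (<) L \<Longrightarrow> set L = A \<Longrightarrow> sorted_list_of_set A = (L::nat list)"
proof -
  assume a: "sorted_wrt (<) L" "set L = A"
  then have "sorted L" "distinct L" by (auto simp: strict_sorted_iff)
  then show ?thesis using a(2) sorted_list_of_set.idem_if_sorted_distinct by blast
qed

lemma perms_len: "xs \<in> perms n \<Longrightarrow> length xs = n"
proof -
  assume "xs \<in> perms n"
  then have "distinct xs" "set xs = {1..n}" unfolding perms_def by auto
  then have "length xs = card {1..n}" using distinct_card[of xs] by simp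
  then show ?thesis by simp
qed

lemma inv_perm_posl: "xs \<in> perms n \<Longrightarrow> inv_perm xs = posl xs"
proof -
  assume a: "xs \<in> perms n"
  have "set xs = {1..<Suc n}" using a unfolding perms_def by (simp add: atLeastLessThanSuc_atLeastAtMost)
  then have s: "sorted_list_of_set (set xs) = [1..<Suc n]" by (simp only: sorted_list_of_set_range)
  show ?thesis
    unfolding inv_perm_def posl_def idx_def by (simp only: s perms_len[OF a])
qed

lemma inv_perm_nth: "xs \<in> perms n \<Longrightarrow> i < n \<Longrightarrow> inv_perm xs ! i = Suc (idx xs (Suc i))"
proof -
  assume a: "xs \<in> perms n" "i < n"
  have "[1..<Suc (length xs)] ! i = Suc i" using a perms_len[OF a(1)] by (simp only: nth_upt)
  then show ?thesis using a perms_len[OF a(1)] unfolding inv_perm_def idx_def by (simp del: upt_Suc)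
qed

lemma length_inv_perm[simp]: "length (inv_perm xs) = length xs"
  unfolding inv_perm_def by (simp del: upt_Suc)

lemma length_posl[simp]: "length (posl xs) = card (set xs)"
  unfolding posl_def by simp

lemma perm_in: "xs \<in> perms n \<Longrightarrow> distinct xs \<and> set xs = {1..n}"
  unfolding perms_def by auto

lemma posl_perm: "xs \<in> perms n \<Longrightarrow> posl xs \<in> perms n"
proof -
  assume a: "xs \<in> perms n"
  note d = perm_in[OF a] perms_len[OF a]
  define f where "f = (\<lambda>v. Suc (idx xs v))"
  have inj: "inj_on f (set xs)"
    by (rule inj_onI) (metis f_def idx_in nat.inject)
  have "f ` set xs \<subseteq> {1..n}" using idx_in d unfolding f_def by fastforce
  moreover have "{1..n} \<subseteq> f ` set xs"
  proof
    fix p assume p: "p \<in> {1..n}"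
    then obtain i where i: "p = Suc i" "i < n" by (cases p) auto
    then have "xs ! i \<in> set xs" "f (xs ! i) = p" using d idx_nth unfolding f_def by auto
    then show "p \<in> f ` set xs" by blast
  qed
  ultimately have "f ` set xs = {1..n}" by blast
  moreover have "distinct (map f (sorted_list_of_set (set xs)))"
    using inj by (simp add: distinct_map)
  ultimately show ?thesis unfolding perms_def posl_def f_def[symmetric] by simp
qed

lemma posl_nth: "xs \<in> perms n \<Longrightarrow> i < n \<Longrightarrow> posl xs ! i = Suc (idx xs (Suc i))"
  using inv_perm_nth inv_perm_posl by metis

lemma posl_posl: "xs \<in> perms n \<Longrightarrow> posl (posl xs) = xs"
proof -
  assume a: "xs \<in> perms n"
  note d = perm_in[OF a] perms_len[OF a]
  have b: "posl xs \<in> perms n" using posl_perm[OF a] .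
  note e = perm_in[OF b] perms_len[OF b]
  show ?thesis
  proof (rule nth_equalityI)
    show "length (posl (posl xs)) = length xs" using perms_len[OF posl_perm[OF b]] d by simp
    fix i assume "i < length (posl (posl xs))"
    then have i: "i < n" using perms_len[OF posl_perm[OF b]] by simp
    define v where "v = xs ! i"
    have v: "v \<in> {1..n}" using d i v_def by auto
    then have "v - 1 < n" by auto
    then have "posl xs ! (v - 1) = Suc (idx xs v)" using posl_nth[OF a] v by simp
    also have "\<dots> = Suc i" using idx_nth d i v_def by simp
    finally have "idx (posl xs) (Suc i) = v - 1" using idx_nth[of "posl xs" "v - 1"] e \<open>v - 1 < n\<close> by simp
    then show "posl (posl xs) ! i = xs ! i" using posl_nth[OF b i] v v_def by simp
  qed
qed

lemma inv_perm_perm: "xs \<in> perms n \<Longrightarrow> inv_perm xs \<in> perms n"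
  using inv_perm_posl posl_perm by metis

lemma inv_perm_inv_perm: "xs \<in> perms n \<Longrightarrow> inv_perm (inv_perm xs) = xs"
  using inv_perm_posl posl_perm posl_posl by metis

lemma set_take_idx: "distinct xs \<Longrightarrow> v \<in> set xs \<Longrightarrow> (v \<in> set (take m xs)) = (idx xs v < m)"
proof -
  assume a: "distinct xs" "v \<in> set xs"
  show ?thesis
  proof
    assume "v \<in> set (take m xs)"
    then obtain l where l: "l < length (take m xs)" "take m xs ! l = v" by (auto simp: in_set_conv_nth)
    then have "xs ! l = v" "l < m" "l < length xs" by auto
    then show "idx xs v < m" using idx_nth[OF a(1)] by metis
  next
    assume "idx xs v < m"
    then have "take m xs ! idx xs v = v" "idx xs v < length (take m xs)" using idx_in[OF a(2)] by auto
    then show "v \<in> set (take m xs)" by (metis nth_mem)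
  qed
qed

lemma idx_take: "distinct xs \<Longrightarrow> v \<in> set (take m xs) \<Longrightarrow> idx (take m xs) v = idx xs v"
proof -
  assume a: "distinct xs" "v \<in> set (take m xs)"
  then obtain l where l: "l < length (take m xs)" "take m xs ! l = v" by (auto simp: in_set_conv_nth)
  then have "xs ! l = v" "l < length xs" by auto
  then have 1: "idx xs v = l" using idx_nth[OF a(1)] by blast
  have "idx (take m xs) v = l" using idx_nth[of "take m xs" l] l a(1) by simp
  then show ?thesis using 1 by simp
qed

lemma set_drop_idx: "distinct xs \<Longrightarrow> v \<in> set xs \<Longrightarrow> (v \<in> set (drop m xs)) = (m \<le> idx xs v)"
proof -
  assume a: "distinct xs" "v \<in> set xs"
  have "set xs = set (take m xs) \<union> set (drop m xs)" by (metis append_take_drop_id set_append)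
  moreover have "set (take m xs) \<inter> set (drop m xs) = {}" using a(1)
    by (metis append_take_drop_id distinct_append)
  ultimately show ?thesis using set_take_idx[OF a, of m] a(2) by auto
qed

lemma idx_drop: "distinct xs \<Longrightarrow> v \<in> set (drop m xs) \<Longrightarrow> idx xs v = idx (drop m xs) v + m"
proof -
  assume a: "distinct xs" "v \<in> set (drop m xs)"
  then obtain l where l: "l < length (drop m xs)" "drop m xs ! l = v" by (auto simp: in_set_conv_nth)
  then have "xs ! (m + l) = v" "m + l < length xs" by auto
  then have 1: "idx xs v = m + l" using idx_nth[OF a(1)] by blast
  have "idx (drop m xs) v = l" using idx_nth[of "drop m xs" l] l a(1) by simp
  then show ?thesis using 1 by simp
qed

lemma filter_ssl: "finite (S::nat set) \<Longrightarrow> filter P (sorted_list_of_set S) = sorted_list_of_set {x \<in> S. P x}"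
proof -
  assume "finite S"
  have "sorted_list_of_set {x \<in> S. P x} = filter P (sorted_list_of_set S)"
    by (rule ssl) (auto simp: \<open>finite S\<close> intro: sorted_wrt_filter)
  then show ?thesis by simp
qed

lemma posl_take: "distinct xs \<Longrightarrow> filter (\<lambda>p. p \<le> m) (posl xs) = posl (take m xs)"
proof -
  assume a: "distinct xs"
  have "{v \<in> set xs. Suc (idx xs v) \<le> m} = set (take m xs)"
    using set_take_idx[OF a] set_take_subset by fastforce
  then have "filter (\<lambda>p. p \<le> m) (posl xs) = map (\<lambda>v. Suc (idx xs v)) (sorted_list_of_set (set (take m xs)))"
    unfolding posl_def filter_map by (simp add: filter_ssl o_def)
  also have "\<dots> = posl (take m xs)" unfolding posl_def
    using idx_take[OF a] by (intro map_cong) auto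
  finally show ?thesis .
qed

lemma posl_drop: "distinct xs \<Longrightarrow> filter (\<lambda>p. m < p) (posl xs) = map (\<lambda>p. p + m) (posl (drop m xs))"
proof -
  assume a: "distinct xs"
  have "{v \<in> set xs. m < Suc (idx xs v)} = set (drop m xs)"
    using set_drop_idx[OF a] set_drop_subset by fastforce
  then have "filter (\<lambda>p. m < p) (posl xs) = map (\<lambda>v. Suc (idx xs v)) (sorted_list_of_set (set (drop m xs)))"
    unfolding posl_def filter_map by (simp add: filter_ssl o_def)
  also have "\<dots> = map (\<lambda>p. p + m) (posl (drop m xs))" unfolding posl_def map_map
    using idx_drop[OF a] by (intro map_cong) auto
  finally show ?thesis .
qed

definition rf :: "nat list \<Rightarrow> nat \<Rightarrow> nat" where
  "rf xs x = Suc (card {y \<in> set xs. y < x})"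

lemma red_rf: "red xs = map (rf xs) xs"
  unfolding red_def rf_def by simp

lemma rf_mono: "strict_mono_on (set xs) (rf xs)"
proof (rule strict_mono_onI)
  fix x y assume "x \<in> set xs" "y \<in> set xs" "x < y"
  then have "{z \<in> set xs. z < x} \<subset> {z \<in> set xs. z < y}" by auto
  then have "card {z \<in> set xs. z < x} < card {z \<in> set xs. z < y}"
    by (rule psubset_card_mono[rotated]) simp
  then show "rf xs x < rf xs y" unfolding rf_def by simp
qed

lemma rf_inj: "inj_on (rf xs) (set xs)"
  using rf_mono strict_mono_on_imp_inj_on by blast

lemma red_perm: "distinct xs \<Longrightarrow> red xs \<in> perms (length xs)"
proof -
  assume a: "distinct xs"
  have d: "distinct (red xs)" unfolding red_rf using rf_inj a by (simp add: distinct_map)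
  have sub: "set (red xs) \<subseteq> {1..length xs}"
  proof
    fix p assume "p \<in> set (red xs)"
    then obtain x where x: "x \<in> set xs" "p = rf xs x" unfolding red_rf by auto
    have "{y \<in> set xs. y < x} \<subset> set xs" using x(1) by auto
    then have "card {y \<in> set xs. y < x} < card (set xs)" by (rule psubset_card_mono[rotated]) simp
    then show "p \<in> {1..length xs}" using x(2) distinct_card[OF a] unfolding rf_def by simp
  qed
  have "card (set (red xs)) = card {1..length xs}" using distinct_card[OF d]
    by (simp add: red_def)
  then have "set (red xs) = {1..length xs}" using card_subset_eq[OF _ sub] by simp
  then show ?thesis using d unfolding perms_def by simp
qed

lemma posl_map_mono: "distinct xs \<Longrightarrow> strict_mono_on (set xs) f \<Longrightarrow> posl (map f xs) = posl xs"
proof -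
  assume a: "distinct xs" and m: "strict_mono_on (set xs) f"
  have inj: "inj_on f (set xs)" using m strict_mono_on_imp_inj_on by blast
  have dm: "distinct (map f xs)" using a inj by (simp add: distinct_map)
  have "sorted_list_of_set (set (map f xs)) = map f (sorted_list_of_set (set xs))"
  proof (rule ssl)
    show "sorted_wrt (<) (map f (sorted_list_of_set (set xs)))"
      by (rule sorted_wrt_map_mono[OF strict_sorted_list_of_set]) (use m in \<open>auto simp: strict_mono_on_def\<close>)
  qed simp
  moreover have "idx (map f xs) (f v) = idx xs v" if "v \<in> set xs" for v
  proof -
    have "idx xs v < length xs" "xs ! idx xs v = v" using idx_in[OF that] by auto
    then have "map f xs ! idx xs v = f v" by simp
    then show ?thesis using idx_nth[OF dm, of "idx xs v"] \<open>idx xs v < length xs\<close> by simp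
  qed
  ultimately show ?thesis unfolding posl_def by simp
qed

lemma posl_red: "distinct xs \<Longrightarrow> posl (red xs) = posl xs"
  unfolding red_rf using posl_map_mono rf_mono by blast

lemma red_iff: "distinct xs \<Longrightarrow> length xs = m \<Longrightarrow> \<sigma> \<in> perms m \<Longrightarrow>
   (red xs = \<sigma>) = (posl xs = inv_perm \<sigma>)"
proof -
  assume a: "distinct xs" "length xs = m" "\<sigma> \<in> perms m"
  have r: "red xs \<in> perms m" using red_perm[OF a(1)] a(2) by simp
  show ?thesis
  proof
    assume "red xs = \<sigma>"
    then show "posl xs = inv_perm \<sigma>" using posl_red[OF a(1)] inv_perm_posl[OF a(3)] by simp
  next
    assume "posl xs = inv_perm \<sigma>"
    then have "posl (red xs) = posl \<sigma>" using posl_red[OF a(1)] inv_perm_posl[OF a(3)] by simp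
    then have "posl (posl (red xs)) = posl (posl \<sigma>)" by simp
    then show "red xs = \<sigma>" using posl_posl[OF r] posl_posl[OF a(3)] by simp
  qed
qed

lemma subseq_set: "subseq xs ys \<Longrightarrow> set xs \<subseteq> set ys"
proof
  fix x assume "subseq xs ys" "x \<in> set xs"
  then obtain y where "y \<in> set ys" "x = y" by (rule list_emb_set)
  then show "x \<in> set ys" by simp
qed

lemma sub_filter: "distinct ys \<Longrightarrow> distinct xs \<Longrightarrow> subseq xs ys \<Longrightarrow>
   filter (\<lambda>x. x \<in> set xs) ys = xs"
proof -
  assume a: "distinct ys" "distinct xs" "subseq xs ys"
  have s: "set xs \<subseteq> set ys" using subseq_set[OF a(3)] .
  have "subseq (filter (\<lambda>x. x \<in> set xs) xs) (filter (\<lambda>x. x \<in> set xs) ys)"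
    using subseq_filter[OF a(3)] .
  then have 1: "subseq xs (filter (\<lambda>x. x \<in> set xs) ys)" by simp
  have "length (filter (\<lambda>x. x \<in> set xs) ys) = card (set (filter (\<lambda>x. x \<in> set xs) ys))"
    using a(1) distinct_card[of "filter (\<lambda>x. x \<in> set xs) ys"] by (simp only: distinct_filter)
  also have "set (filter (\<lambda>x. x \<in> set xs) ys) = set xs" using s by auto
  also have "card (set xs) = length xs" using a(2) by (simp add: distinct_card)
  finally show ?thesis using subseq_same_length[OF 1] by simp
qed

lemma subseq_iff_filter: "distinct ys \<Longrightarrow> distinct xs \<Longrightarrow> set xs = {x \<in> set ys. P x} \<Longrightarrow>
   subseq xs ys = (filter P ys = xs)"
proof -
  assume a: "distinct ys" "distinct xs" "set xs = {x \<in> set ys. P x}"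
  have "filter (\<lambda>x. x \<in> set xs) ys = filter P ys" using a(3) by (intro filter_cong) auto
  then show ?thesis using sub_filter[OF a(1,2)] by (metis subseq_filter_left)
qed

lemma last_filter: "xs \<noteq> [] \<Longrightarrow> P (last xs) \<Longrightarrow> filter P xs \<noteq> [] \<and> last (filter P xs) = last xs"
proof -
  assume a: "xs \<noteq> []" "P (last xs)"
  have "xs = butlast xs @ [last xs]" using a(1) by simp
  then have "filter P xs = filter P (butlast xs) @ [last xs]" using a(2) by (metis filter.simps filter_append)
  then show ?thesis by simp
qed

lemma sh_char:
  assumes \<alpha>: "\<alpha> \<in> perms n" and n: "n = j + k + 1" and \<pi>: "\<pi> \<in> perms j" and T: "T \<in> perms k"
    and \<delta>: "\<delta> = (j + 1) # map (\<lambda>x. x + j + 1) T"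
  shows "(\<alpha> \<in> Sh_l \<pi> \<delta>) = (\<alpha> ! 0 = j + 1 \<and> filter (\<lambda>p. p \<le> j) \<alpha> = \<pi>
            \<and> filter (\<lambda>p. Suc j < p) \<alpha> = map (\<lambda>x. x + j + 1) T)" (is ?A)
    and "0 < j + k \<Longrightarrow> (\<alpha> \<in> Sh_ls \<pi> \<delta>) = (\<alpha> \<in> Sh_l \<pi> \<delta> \<and> Suc j < \<alpha> ! (n - 1))" (is "_ \<Longrightarrow> ?B")
    and "0 < j + k \<Longrightarrow> (\<alpha> \<in> Sh_ll \<pi> \<delta>) = (\<alpha> \<in> Sh_l \<pi> \<delta> \<and> Suc j < \<alpha> ! 1)" (is "_ \<Longrightarrow> ?C")
proof -
  have ad: "distinct \<alpha>" "set \<alpha> = {1..n}" "length \<alpha> = n" using perm_in[OF \<alpha>] perms_len[OF \<alpha>] by auto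
  have pd: "distinct \<pi>" "set \<pi> = {1..j}" "length \<pi> = j" using perm_in[OF \<pi>] perms_len[OF \<pi>] by auto
  have td: "distinct T" "set T = {1..k}" "length T = k" using perm_in[OF T] perms_len[OF T] by auto
  have sm: "set (map (\<lambda>x. x + j + 1) T) = {j + 2..n}"
  proof
    show "set (map (\<lambda>x. x + j + 1) T) \<subseteq> {j + 2..n}" using td n by (intro subsetI) auto
    show "{j + 2..n} \<subseteq> set (map (\<lambda>x. x + j + 1) T)"
    proof
      fix y assume y: "y \<in> {j + 2..n}"
      then have y1: "j + 2 \<le> y" "y \<le> n" by simp_all
      then have "1 \<le> y - j - 1" "y - j - 1 \<le> k" "y = (y - j - 1) + j + 1" using n by arith+
      then have "y - j - 1 \<in> set T" "y = (y - j - 1) + j + 1" using td(2) by simp_all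
      then show "y \<in> set (map (\<lambda>x. x + j + 1) T)" unfolding set_map by (rule image_eqI[rotated])
    qed
  qed
  have sd: "set \<delta> = {j + 1..n}" using sm \<delta> n by (intro set_eqI) (simp, linarith)
  have dd: "distinct \<delta>" using \<delta> sm td(1) by (auto simp: distinct_map inj_on_def)
  have ld: "length \<delta> = k + 1" using \<delta> td by simp
  have sp1: "set \<pi> = {x \<in> set \<alpha>. x \<le> j}" using pd ad n by (intro set_eqI) (simp; arith)
  have sd1: "set \<delta> = {x \<in> set \<alpha>. j < x}" using sd ad n by (intro set_eqI) (simp; arith)
  have d0: "\<delta> ! 0 = j + 1" using \<delta> by simp
  have sh: "is_shuffle \<pi> \<delta> \<alpha> = (filter (\<lambda>p. p \<le> j) \<alpha> = \<pi> \<and> filter (\<lambda>p. j < p) \<alpha> = \<delta>)"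
    unfolding is_shuffle_def using ad pd ld n subseq_iff_filter[OF ad(1) pd(1) sp1]
      subseq_iff_filter[OF ad(1) dd sd1] by auto
  have A0: "(\<alpha> \<in> Sh_l \<pi> \<delta>) = (\<alpha> ! 0 = j + 1 \<and> filter (\<lambda>p. p \<le> j) \<alpha> = \<pi> \<and> filter (\<lambda>p. j < p) \<alpha> = \<delta>)"
    unfolding Sh_l_def using sh ld d0 by auto
  have key: "filter (\<lambda>p. j < p) \<alpha> = (j + 1) # filter (\<lambda>p. Suc j < p) \<alpha>" if h: "\<alpha> ! 0 = j + 1"
  proof -
    obtain \<beta> where b: "\<alpha> = (j + 1) # \<beta>" using h ad n by (cases \<alpha>) auto
    then have "j + 1 \<notin> set \<beta>" using ad by simp
    then have "\<forall>x\<in>set \<beta>. (j < x) = (Suc j < x)" by (metis Suc_eq_plus1 Suc_lessD Suc_lessI)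
    then have "filter (\<lambda>p. j < p) \<beta> = filter (\<lambda>p. Suc j < p) \<beta>" by (intro filter_cong) auto
    then show ?thesis using b by simp
  qed
  show ?A using A0 key \<delta> by auto
  assume jk: "0 < j + k"
  then have n2: "2 \<le> n" using n by arith
  have ne: "\<alpha> ! i \<noteq> j + 1" if "0 < i" "i < n" "\<alpha> ! 0 = j + 1" for i
    using that ad nth_eq_iff_index_eq[OF ad(1), of i 0] by auto
  have inr: "\<alpha> ! i \<in> {1..n}" if "i < n" for i using that ad by (metis nth_mem)
  show ?B
  proof -
    have "(\<alpha> ! (n - 1) = \<delta> ! k) = (Suc j < \<alpha> ! (n - 1))" if L: "\<alpha> \<in> Sh_l \<pi> \<delta>"
    proof
      have a0: "\<alpha> ! 0 = j + 1" using L A0 by simp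
      assume "\<alpha> ! (n - 1) = \<delta> ! k"
      then have "\<alpha> ! (n - 1) \<in> set \<delta>" using ld by (metis lessI nth_mem Suc_eq_plus1)
      then show "Suc j < \<alpha> ! (n - 1)" using sd ne[of "n - 1"] n2 a0 by fastforce
    next
      have a0: "\<alpha> ! 0 = j + 1" "filter (\<lambda>p. j < p) \<alpha> = \<delta>" using L A0 by simp_all
      assume h: "Suc j < \<alpha> ! (n - 1)"
      have ne: "\<alpha> \<noteq> []" using ad n by auto
      have ln: "last \<alpha> = \<alpha> ! (n - 1)" "\<alpha> \<noteq> []" using last_conv_nth[OF ne] ad(3) ne by simp_all
      then have "last \<delta> = \<alpha> ! (n - 1)" using last_filter[of \<alpha> "\<lambda>p. j < p"] h a0 by simp
      moreover have "last \<delta> = \<delta> ! k" using ld by (metis last_conv_nth list.size(3) add_diff_cancel_right' nat.distinct(1) Suc_eq_plus1)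
      ultimately show "\<alpha> ! (n - 1) = \<delta> ! k" by simp
    qed
    moreover have "j + length \<delta> - 1 = n - 1" using ld n by simp
    ultimately show ?thesis unfolding Sh_ls_def Sh_l_def using pd ld by auto
  qed
  show ?C
  proof -
    have "(2 \<le> length \<delta> \<and> \<alpha> ! 1 = \<delta> ! 1) = (Suc j < \<alpha> ! 1)" if L: "\<alpha> \<in> Sh_l \<pi> \<delta>"
    proof
      have a0: "\<alpha> ! 0 = j + 1" using L A0 by simp
      assume "2 \<le> length \<delta> \<and> \<alpha> ! 1 = \<delta> ! 1"
      then have "\<alpha> ! 1 \<in> set \<delta>" by (metis nth_mem less_le_trans one_less_numeral_iff semiring_norm(76))
      then show "Suc j < \<alpha> ! 1" using sd ne[of 1] n2 a0 by fastforce
    next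
      have a0: "\<alpha> ! 0 = j + 1" "filter (\<lambda>p. j < p) \<alpha> = \<delta>" using L A0 by simp_all
      assume h: "Suc j < \<alpha> ! 1"
      obtain b \<gamma> where bg: "\<alpha> = (j + 1) # b # \<gamma>" using ad n2 a0
        by (cases \<alpha>; cases "tl \<alpha>") auto
      then have "\<delta> = (j + 1) # b # filter (\<lambda>p. j < p) \<gamma>" using h a0 by auto
      then show "2 \<le> length \<delta> \<and> \<alpha> ! 1 = \<delta> ! 1" using bg by simp
    qed
    then show ?thesis unfolding Sh_ll_def Sh_l_def by auto
  qed
qed

lemma mu_char:
  assumes \<mu>: "\<mu> \<in> perms n" and n: "n = j + k + 1" and \<sigma>: "\<sigma> \<in> perms j"
  shows "(\<exists>\<sigma>' \<tau>'. \<mu> = \<sigma>' @ [1] @ \<tau>' \<and> red \<sigma>' = \<sigma> \<and> red \<tau>' = \<tau> \<and> Q \<tau>') =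
         (\<mu> ! j = 1 \<and> red (take j \<mu>) = \<sigma> \<and> red (drop (Suc j) \<mu>) = \<tau> \<and> Q (drop (Suc j) \<mu>))"
proof
  assume "\<exists>\<sigma>' \<tau>'. \<mu> = \<sigma>' @ [1] @ \<tau>' \<and> red \<sigma>' = \<sigma> \<and> red \<tau>' = \<tau> \<and> Q \<tau>'"
  then obtain \<sigma>' \<tau>' where h: "\<mu> = \<sigma>' @ [1] @ \<tau>'" "red \<sigma>' = \<sigma>" "red \<tau>' = \<tau>" "Q \<tau>'" by blast
  have "length \<sigma>' = j" using h(2) perms_len[OF \<sigma>] unfolding red_def by auto
  then show "\<mu> ! j = 1 \<and> red (take j \<mu>) = \<sigma> \<and> red (drop (Suc j) \<mu>) = \<tau> \<and> Q (drop (Suc j) \<mu>)"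
    using h by (simp add: nth_append)
next
  assume h: "\<mu> ! j = 1 \<and> red (take j \<mu>) = \<sigma> \<and> red (drop (Suc j) \<mu>) = \<tau> \<and> Q (drop (Suc j) \<mu>)"
  have "j < length \<mu>" using perms_len[OF \<mu>] n by simp
  then have "\<mu> = take j \<mu> @ [1] @ drop (Suc j) \<mu>" using id_take_nth_drop[of j \<mu>] h by simp
  then show "\<exists>\<sigma>' \<tau>'. \<mu> = \<sigma>' @ [1] @ \<tau>' \<and> red \<sigma>' = \<sigma> \<and> red \<tau>' = \<tau> \<and> Q \<tau>'" using h by blast
qed

lemma link:
  assumes \<mu>: "\<mu> \<in> perms n" and n: "n = j + k + 1" and \<sigma>: "\<sigma> \<in> perms j" and \<tau>: "\<tau> \<in> perms k"
  shows "(inv_perm \<mu> ! 0 = j + 1 \<and> filter (\<lambda>p. p \<le> j) (inv_perm \<mu>) = inv_perm \<sigma>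
           \<and> filter (\<lambda>p. Suc j < p) (inv_perm \<mu>) = map (\<lambda>x. x + j + 1) (inv_perm \<tau>))
         = (\<mu> ! j = 1 \<and> red (take j \<mu>) = \<sigma> \<and> red (drop (Suc j) \<mu>) = \<tau>)" (is ?A)
    and "0 < j + k \<Longrightarrow> (Suc j < inv_perm \<mu> ! (n - 1)) = (n \<in> set (drop (Suc j) \<mu>))" (is "_ \<Longrightarrow> ?B")
    and "0 < j + k \<Longrightarrow> (Suc j < inv_perm \<mu> ! 1) = (2 \<in> set (drop (Suc j) \<mu>))" (is "_ \<Longrightarrow> ?C")
proof -
  have md: "distinct \<mu>" "set \<mu> = {1..n}" "length \<mu> = n" using perm_in[OF \<mu>] perms_len[OF \<mu>] by auto
  have e: "inv_perm \<mu> = posl \<mu>" using inv_perm_posl[OF \<mu>] .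
  have a0: "inv_perm \<mu> ! 0 = Suc (idx \<mu> 1)" using inv_perm_nth[OF \<mu>, of 0] n by simp
  have 1: "(Suc (idx \<mu> 1) = j + 1) = (\<mu> ! j = 1)"
  proof
    assume "Suc (idx \<mu> 1) = j + 1"
    then show "\<mu> ! j = 1" using idx_in[of 1 \<mu>] md n by simp
  next
    assume "\<mu> ! j = 1"
    then show "Suc (idx \<mu> 1) = j + 1" using idx_nth[OF md(1), of j] md n by simp
  qed
  have f1: "filter (\<lambda>p. p \<le> j) (inv_perm \<mu>) = posl (take j \<mu>)" using e posl_take[OF md(1)] by simp
  have r1: "(red (take j \<mu>) = \<sigma>) = (posl (take j \<mu>) = inv_perm \<sigma>)"
    by (rule red_iff[OF _ _ \<sigma>]) (use md n in simp_all)
  have f2: "filter (\<lambda>p. Suc j < p) (inv_perm \<mu>) = map (\<lambda>x. x + j + 1) (posl (drop (Suc j) \<mu>))"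
    using e posl_drop[OF md(1), of "Suc j"] by (simp add: Suc_le_eq)
  have inj: "inj (\<lambda>x::nat. x + j + 1)" by (simp add: inj_on_def)
  have r2: "(red (drop (Suc j) \<mu>) = \<tau>) = (posl (drop (Suc j) \<mu>) = inv_perm \<tau>)"
    by (rule red_iff[OF _ _ \<tau>]) (use md n in simp_all)
  show ?A using a0 1 f1 r1 f2 r2 inj_map_eq_map[OF inj] by auto
  assume jk: "0 < j + k"
  then have n2: "2 \<le> n" using n by arith
  have "inv_perm \<mu> ! (n - 1) = Suc (idx \<mu> n)" using inv_perm_nth[OF \<mu>, of "n - 1"] n by simp
  moreover have "n \<in> set \<mu>" using md n by simp
  ultimately show ?B using set_drop_idx[OF md(1), of n "Suc j"] by (simp add: Suc_le_eq)
  have "inv_perm \<mu> ! 1 = Suc (idx \<mu> 2)" using inv_perm_nth[OF \<mu>, of 1] n2 by (simp add: numeral_2_eq_2)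
  moreover have "2 \<in> set \<mu>" using md n2 by simp
  ultimately show ?C using set_drop_idx[OF md(1), of 2 "Suc j"] by (simp add: Suc_le_eq)
qed

lemma reindex:
  fixes t :: "'a::comm_ring_1"
  assumes "A \<subseteq> perms n" "B \<subseteq> perms n" "\<And>\<mu>. \<mu> \<in> perms n \<Longrightarrow> (\<mu> \<in> A) = (inv_perm \<mu> \<in> B)"
  shows "(\<Sum>\<mu>\<in>A. t ^ ides \<mu>) = (\<Sum>\<alpha>\<in>B. t ^ des \<alpha>)"
proof -
  have "bij_betw inv_perm A B"
  proof (rule bij_betw_byWitness[where f' = inv_perm])
    show "\<forall>a\<in>A. inv_perm (inv_perm a) = a" using assms(1) inv_perm_inv_perm by blast
    show "\<forall>a\<in>B. inv_perm (inv_perm a) = a" using assms(2) inv_perm_inv_perm by blast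
    show "inv_perm ` A \<subseteq> B" using assms(1,3) by blast
    show "inv_perm ` B \<subseteq> A"
    proof
      fix x assume "x \<in> inv_perm ` B"
      then obtain b where b: "b \<in> B" "x = inv_perm b" by blast
      then have "x \<in> perms n" "inv_perm x = b" using assms(2) inv_perm_perm inv_perm_inv_perm by blast+
      then show "x \<in> A" using assms(3) b by simp
    qed
  qed
  then have "(\<Sum>\<mu>\<in>A. t ^ des (inv_perm \<mu>)) = (\<Sum>\<alpha>\<in>B. t ^ des \<alpha>)"
    by (rule sum.reindex_bij_betw)
  then show ?thesis unfolding ides_def .
qed

lemma set_delta: "T \<in> perms k \<Longrightarrow> set ((j + 1) # map (\<lambda>x. x + j + 1) T) = {j + 1..j + k + 1}"
proof -
  assume T: "T \<in> perms k"
  have td: "distinct T" "set T = {1..k}" "length T = k" using perm_in[OF T] perms_len[OF T] by auto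
  have sm: "set (map (\<lambda>x. x + j + 1) T) = {j + 2..j + k + 1}"
  proof
    show "set (map (\<lambda>x. x + j + 1) T) \<subseteq> {j + 2..j + k + 1}" using td by (intro subsetI) auto
    show "{j + 2..j + k + 1} \<subseteq> set (map (\<lambda>x. x + j + 1) T)"
    proof
      fix y assume y: "y \<in> {j + 2..j + k + 1}"
      then have y1: "j + 2 \<le> y" "y \<le> j + k + 1" by simp_all
      then have "1 \<le> y - j - 1" "y - j - 1 \<le> k" "y = (y - j - 1) + j + 1" by arith+
      then have "y - j - 1 \<in> set T" "y = (y - j - 1) + j + 1" using td(2) by simp_all
      then show "y \<in> set (map (\<lambda>x. x + j + 1) T)" unfolding set_map by (rule image_eqI[rotated])
    qed
  qed
  then show ?thesis by (intro set_eqI) (simp, linarith)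
qed

lemma Sh_sub:
  assumes \<pi>: "\<pi> \<in> perms j" and T: "T \<in> perms k" and n: "n = j + k + 1"
  shows "Sh_l \<pi> ((j + 1) # map (\<lambda>x. x + j + 1) T) \<subseteq> perms n"
proof
  fix \<alpha> assume "\<alpha> \<in> Sh_l \<pi> ((j + 1) # map (\<lambda>x. x + j + 1) T)"
  then have sh: "is_shuffle \<pi> ((j + 1) # map (\<lambda>x. x + j + 1) T) \<alpha>" unfolding Sh_l_def by simp
  have pd: "set \<pi> = {1..j}" "length \<pi> = j" using perm_in[OF \<pi>] perms_len[OF \<pi>] by auto
  have ld: "length T = k" using perms_len[OF T] .
  have d: "distinct \<alpha>" "length \<alpha> = n" using sh pd ld n unfolding is_shuffle_def by simp_all
  have s1: "set \<pi> \<subseteq> set \<alpha>" and s2: "set ((j + 1) # map (\<lambda>x. x + j + 1) T) \<subseteq> set \<alpha>"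
    using sh subseq_set unfolding is_shuffle_def by blast+
  have sd: "set ((j + 1) # map (\<lambda>x. x + j + 1) T) = {j + 1..n}" using set_delta[OF T, of j] n by (simp only:)
  have "{1..j} \<union> {j + 1..n} \<subseteq> set \<alpha>" using s1 s2 unfolding sd pd(1) by (rule Un_least)
  moreover have "{1..j} \<union> {j + 1..n} = {1..n}" using n by (intro set_eqI) (simp; arith)
  ultimately have sub: "{1..n} \<subseteq> set \<alpha>" by (simp only:)
  have "card {1..n} = card (set \<alpha>)" using d distinct_card[of \<alpha>] by simp
  then have "set \<alpha> = {1..n}" using card_subset_eq[OF _ sub] by simp
  then show "\<alpha> \<in> perms n" using d unfolding perms_def by simp
qed


theorem proposition3p3:
  fixes \<sigma> \<tau> :: "nat list" and j k :: nat and t :: "'a::comm_ring_1"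
  assumes "\<sigma> \<in> perms j" and "\<tau> \<in> perms k" and "0 < j + k"
  defines "\<pi> \<equiv> inv_perm \<sigma>"
    and "\<delta> \<equiv> (j + 1) # map (\<lambda>x. x + j + 1) (inv_perm \<tau>)"
  shows "(\<Sum>\<mu>\<in>diamond \<sigma> \<tau>. t ^ ides \<mu>) = (\<Sum>\<alpha>\<in>Sh_l \<pi> \<delta>. t ^ des \<alpha>) \<and>
         (\<Sum>\<mu>\<in>utri \<sigma> \<tau>. t ^ ides \<mu>) = (\<Sum>\<alpha>\<in>Sh_ls \<pi> \<delta>. t ^ des \<alpha>) \<and>
         (\<Sum>\<mu>\<in>dtri \<sigma> \<tau>. t ^ ides \<mu>) = (\<Sum>\<alpha>\<in>Sh_ll \<pi> \<delta>. t ^ des \<alpha>)"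
proof -
  define n where "n = j + k + 1"
  have \<sigma>: "\<sigma> \<in> perms j" and \<tau>: "\<tau> \<in> perms k" and jk: "0 < j + k" using assms(1-3) .
  have l: "length \<sigma> + length \<tau> + 1 = n" using perms_len[OF \<sigma>] perms_len[OF \<tau>] n_def by simp
  have \<pi>p: "\<pi> \<in> perms j" using inv_perm_perm[OF \<sigma>] \<pi>_def by simp
  have Tp: "inv_perm \<tau> \<in> perms k" using inv_perm_perm[OF \<tau>] .
  have \<delta>eq: "\<delta> = (j + 1) # map (\<lambda>x. x + j + 1) (inv_perm \<tau>)" unfolding \<delta>_def ..
  have sub: "Sh_l \<pi> \<delta> \<subseteq> perms n" using Sh_sub[OF \<pi>p Tp n_def] \<delta>_def by simp
  have subs: "Sh_ls \<pi> \<delta> \<subseteq> perms n" "Sh_ll \<pi> \<delta> \<subseteq> perms n"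
    using sub unfolding Sh_ls_def Sh_l_def Sh_ll_def by auto
  have gen: "(\<exists>\<sigma>' \<tau>'. \<mu> = \<sigma>' @ [1] @ \<tau>' \<and> red \<sigma>' = \<sigma> \<and> red \<tau>' = \<tau> \<and> Q \<tau>')
     = (inv_perm \<mu> \<in> Sh_l \<pi> \<delta> \<and> Q (drop (Suc j) \<mu>))" if \<mu>: "\<mu> \<in> perms n" for \<mu> Q
  proof -
    have "(\<exists>\<sigma>' \<tau>'. \<mu> = \<sigma>' @ [1] @ \<tau>' \<and> red \<sigma>' = \<sigma> \<and> red \<tau>' = \<tau> \<and> Q \<tau>')
       = (\<mu> ! j = 1 \<and> red (take j \<mu>) = \<sigma> \<and> red (drop (Suc j) \<mu>) = \<tau> \<and> Q (drop (Suc j) \<mu>))"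
      by (rule mu_char[OF \<mu> n_def \<sigma>])
    also have "\<dots> = (inv_perm \<mu> \<in> Sh_l \<pi> \<delta> \<and> Q (drop (Suc j) \<mu>))"
      using link(1)[OF \<mu> n_def \<sigma> \<tau>] sh_char(1)[OF inv_perm_perm[OF \<mu>] n_def \<pi>p Tp \<delta>eq] \<pi>_def
      by auto
    finally show ?thesis .
  qed
  have D: "(\<Sum>\<mu>\<in>diamond \<sigma> \<tau>. t ^ ides \<mu>) = (\<Sum>\<alpha>\<in>Sh_l \<pi> \<delta>. t ^ des \<alpha>)"
  proof (rule reindex[OF _ sub])
    show "diamond \<sigma> \<tau> \<subseteq> perms n" unfolding diamond_def l by blast
    fix \<mu> assume \<mu>: "\<mu> \<in> perms n"
    show "(\<mu> \<in> diamond \<sigma> \<tau>) = (inv_perm \<mu> \<in> Sh_l \<pi> \<delta>)"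
      using gen[OF \<mu>, of "\<lambda>_. True"] \<mu> unfolding diamond_def l by simp
  qed
  have U: "(\<Sum>\<mu>\<in>utri \<sigma> \<tau>. t ^ ides \<mu>) = (\<Sum>\<alpha>\<in>Sh_ls \<pi> \<delta>. t ^ des \<alpha>)"
  proof (rule reindex[OF _ subs(1)])
    show "utri \<sigma> \<tau> \<subseteq> perms n" unfolding utri_def l by blast
    fix \<mu> assume \<mu>: "\<mu> \<in> perms n"
    have "(\<mu> \<in> utri \<sigma> \<tau>) = (inv_perm \<mu> \<in> Sh_l \<pi> \<delta> \<and> n \<in> set (drop (Suc j) \<mu>))"
      using gen[OF \<mu>, of "\<lambda>\<tau>'. n \<in> set \<tau>'"] \<mu> unfolding utri_def l by simp
    also have "\<dots> = (inv_perm \<mu> \<in> Sh_ls \<pi> \<delta>)"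
      using link(2)[OF \<mu> n_def \<sigma> \<tau> jk] sh_char(2)[OF inv_perm_perm[OF \<mu>] n_def \<pi>p Tp \<delta>eq jk] by simp
    finally show "(\<mu> \<in> utri \<sigma> \<tau>) = (inv_perm \<mu> \<in> Sh_ls \<pi> \<delta>)" .
  qed
  have T: "(\<Sum>\<mu>\<in>dtri \<sigma> \<tau>. t ^ ides \<mu>) = (\<Sum>\<alpha>\<in>Sh_ll \<pi> \<delta>. t ^ des \<alpha>)"
  proof (rule reindex[OF _ subs(2)])
    show "dtri \<sigma> \<tau> \<subseteq> perms n" unfolding dtri_def l by blast
    fix \<mu> assume \<mu>: "\<mu> \<in> perms n"
    have "(\<mu> \<in> dtri \<sigma> \<tau>) = (inv_perm \<mu> \<in> Sh_l \<pi> \<delta> \<and> 2 \<in> set (drop (Suc j) \<mu>))"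
      using gen[OF \<mu>, of "\<lambda>\<tau>'. 2 \<in> set \<tau>'"] \<mu> unfolding dtri_def l by simp
    also have "\<dots> = (inv_perm \<mu> \<in> Sh_ll \<pi> \<delta>)"
      using link(3)[OF \<mu> n_def \<sigma> \<tau> jk] sh_char(3)[OF inv_perm_perm[OF \<mu>] n_def \<pi>p Tp \<delta>eq jk] by simp
    finally show "(\<mu> \<in> dtri \<sigma> \<tau>) = (inv_perm \<mu> \<in> Sh_ll \<pi> \<delta>)" .
  qed
  show ?thesis using D U T by blast
qed

end
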